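(* We have \[ \left(\frac{\Gamma(1/4)}{\Gamma(3/4)}\right)^4=80-\frac{2048}{625}\sum_{n\ge0}\frac{(n+1)\,(3/4)_n^4}{(9/4)_n^4} \quad\text{and}\quad \left(\frac{\Gamma(3/4)}{\Gamma(1/4)}\right)^4=\frac1{16}-\frac{4}{81}\sum_{n\ge0}\frac{(2n+1)\,(1/4)_n^4}{(7/4)_n^4}. \]
   Context: $(a)_n=a(a+1)\cdots(a+n-1)$ denotes the rising Pochhammer symbol, $(a)_0=1$. *)

theory Defs
  imports "HOL-Analysis.Analysis"
begin

end

theory Submission imports Defs "HOL-Analysis.Analysis" begin

lemma ratio_lim:
  fixes a b :: real
  assumes a: "a > 0" and b: "b > 0"
  shows "(\<lambda>n. (pochhammer a n / pochhammer b n) * real n powr (b - a)) \<longlonglongrightarrow> Gamma b / Gamma a"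
proof -
  have "(\<lambda>n. Gamma_series' b n / Gamma_series' a n) \<longlonglongrightarrow> Gamma b / Gamma a"
    using Gamma_real_pos[OF a] by (intro tendsto_intros Gamma_series'_LIMSEQ) auto
  moreover have "eventually (\<lambda>n. Gamma_series' b n / Gamma_series' a n
     = (pochhammer a n / pochhammer b n) * real n powr (b - a)) sequentially"
    using eventually_gt_at_top[of 0]
  proof eventually_elim
    case (elim n)
    have pa: "pochhammer a n > 0" using a by (intro pochhammer_pos)
    have pb: "pochhammer b n > 0" using b by (intro pochhammer_pos)
    have "real n powr (b - a) = exp (b * ln (real n)) / exp (a * ln (real n))"
      using elim by (simp add: powr_def exp_diff[symmetric] algebra_simps)
    then show ?case using pa pb
      by (simp add: Gamma_series'_def field_simps)
  qed
  ultimately show ?thesis by (rule Lim_transform_eventually)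
qed

lemma one_plus_lim: "(\<lambda>n. (real n + c) / real n) \<longlonglongrightarrow> (1::real)"
proof -
  have "(\<lambda>n. 1 + c * inverse (real n)) \<longlonglongrightarrow> 1 + c * 0"
    by (intro tendsto_intros tendsto_inverse_0_at_top filterlim_real_sequentially)
  moreover have "eventually (\<lambda>n. 1 + c * inverse (real n) = (real n + c) / real n) sequentially"
    using eventually_gt_at_top[of 0] by eventually_elim (simp add: field_simps)
  ultimately show ?thesis using Lim_transform_eventually by fastforce
qed

lemma alg1:
  fixes x p r u v c :: real
  assumes "x > 0" "p ^ 4 = x ^ 6"
  shows "(((x + u/2) / x) * ((x + u/2) / x) + (v - u^2/4) * (inverse x * inverse x)) * (((x + c) / x) * (r * p)) ^ 4
       = (x ^ 2 + u * x + v) * (x + c) ^ 4 * r ^ 4"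
proof -
  have "(((x + c) / x) * (r * p)) ^ 4 = ((x + c) / x) ^ 4 * r ^ 4 * p ^ 4"
    by (simp only: power_mult_distrib)
  also have "\<dots> = ((x + c) / x) ^ 4 * r ^ 4 * x ^ 6" using assms by simp
  finally have e: "(((x + c) / x) * (r * p)) ^ 4 = (x + c) ^ 4 * r ^ 4 * x ^ 2"
    using assms by (simp add: power_divide field_simps power_numeral_reduce)
  show ?thesis unfolding e using assms by (simp add: field_simps power2_eq_square)
qed

lemma G_lim:
  fixes a b u v c :: real
  assumes a: "a > 0" and b: "b > 0" and ba: "b - a = 3/2"
  shows "(\<lambda>n. (real n ^ 2 + u * real n + v) * (real n + c) ^ 4 *
        (pochhammer a n / pochhammer b n) ^ 4) \<longlonglongrightarrow> (Gamma b / Gamma a) ^ 4"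
proof -
  have r: "(\<lambda>n. (pochhammer a n / pochhammer b n) * real n powr (b - a)) \<longlonglongrightarrow> Gamma b / Gamma a"
    by (rule ratio_lim[OF a b])
  have q1: "(\<lambda>n. ((real n + u/2) / real n) * ((real n + u/2) / real n) + (v - u^2/4) * (inverse (real n) * inverse (real n))) \<longlonglongrightarrow> 1 * 1 + (v - u^2/4) * (0 * 0)"
    by (intro tendsto_intros one_plus_lim tendsto_inverse_0_at_top filterlim_real_sequentially)
  have "(\<lambda>n. (((real n + u/2) / real n) * ((real n + u/2) / real n) + (v - u^2/4) * (inverse (real n) * inverse (real n)))
      * (((real n + c) / real n) * ((pochhammer a n / pochhammer b n) * real n powr (b - a))) ^ 4)
     \<longlonglongrightarrow> (1 * 1 + (v - u^2/4) * (0 * 0)) * (1 * (Gamma b / Gamma a)) ^ 4"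
    by (intro tendsto_intros q1 r one_plus_lim)
  moreover have "eventually (\<lambda>n. (((real n + u/2) / real n) * ((real n + u/2) / real n) + (v - u^2/4) * (inverse (real n) * inverse (real n)))
      * (((real n + c) / real n) * ((pochhammer a n / pochhammer b n) * real n powr (b - a))) ^ 4
      = (real n ^ 2 + u * real n + v) * (real n + c) ^ 4 *
        (pochhammer a n / pochhammer b n) ^ 4) sequentially"
    using eventually_gt_at_top[of 0]
  proof eventually_elim
    case (elim n)
    have "(real n powr (b - a)) ^ 4 = real n ^ 6"
    proof -
      have "(real n powr (b - a)) ^ 4 = real n powr (of_nat 4 * (b - a))"
        using elim by (intro powr_power) auto
      also have "of_nat 4 * (b - a) = 6" using ba by simp
      hence "real n powr (of_nat 4 * (b - a)) = real n powr 6" by simp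
      also have "\<dots> = real n ^ 6" by simp
      finally show ?thesis .
    qed
    then show ?case using elim by (intro alg1) auto
  qed
  ultimately show ?thesis using Lim_transform_eventually by fastforce
qed

lemma tele1:
  fixes n :: nat
  defines "Q \<equiv> \<lambda>n::nat. (real n ^ 2 + 1 * real n + 5/16) * (real n + 5/4) ^ 4 *
        (pochhammer (3/4::real) n / pochhammer (9/4) n) ^ 4"
  shows "real (n + 1) * pochhammer (3/4::real) n ^ 4 / pochhammer (9/4) n ^ 4 = 32 * (Q n - Q (Suc n))"
proof -
  define x where "x = real n"
  define r where "r = pochhammer (3/4::real) n / pochhammer (9/4) n"
  have x: "x + 9/4 > 0" unfolding x_def by simp
  have q0: "Q n = (x^2 + x + 5/16) * (x + 5/4)^4 * r^4" unfolding Q_def x_def r_def by simp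
  have "Q (Suc n) = ((x+1)^2 + (x+1) + 5/16) * (x + 9/4)^4 * (r * (x + 3/4) / (x + 9/4))^4"
    unfolding Q_def x_def r_def pochhammer_Suc by (simp add: algebra_simps)
  also have "\<dots> = ((x+1)^2 + (x+1) + 5/16) * (x + 3/4)^4 * r^4"
    using x by (simp add: power_divide power_mult_distrib)
  finally have q1: "Q (Suc n) = ((x+1)^2 + (x+1) + 5/16) * (x + 3/4)^4 * r^4" .
  have poly: "(x^2 + x + 5/16) * (x + 5/4)^4 - ((x+1)^2 + (x+1) + 5/16) * (x + 3/4)^4 = (x + 1) / 32"
    by (simp add: field_simps) algebra
  have "real (n + 1) * pochhammer (3/4::real) n ^ 4 / pochhammer (9/4) n ^ 4 = (x + 1) * r^4"
    unfolding x_def r_def by (simp add: power_divide)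
  also have "Q n - Q (Suc n) = ((x^2 + x + 5/16) * (x + 5/4)^4 - ((x+1)^2 + (x+1) + 5/16) * (x + 3/4)^4) * r^4"
    by (simp only: q0 q1 left_diff_distrib)
  hence "Q n - Q (Suc n) = (x + 1) / 32 * r^4" by (simp only: poly)
  hence "(x + 1) * r^4 = 32 * (Q n - Q (Suc n))" by simp
  finally show ?thesis .
qed

lemma tele2:
  fixes n :: nat
  defines "Q \<equiv> \<lambda>n::nat. (real n ^ 2 + 0 * real n + 1/16) * (real n + 3/4) ^ 4 *
        (pochhammer (1/4::real) n / pochhammer (7/4) n) ^ 4"
  shows "real (2 * n + 1) * pochhammer (1/4::real) n ^ 4 / pochhammer (7/4) n ^ 4 = 64 * (Q n - Q (Suc n))"
proof -
  define x where "x = real n"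
  define r where "r = pochhammer (1/4::real) n / pochhammer (7/4) n"
  have x: "x + 7/4 > 0" unfolding x_def by simp
  have q0: "Q n = (x^2 + 1/16) * (x + 3/4)^4 * r^4" unfolding Q_def x_def r_def by simp
  have "Q (Suc n) = ((x+1)^2 + 1/16) * (x + 7/4)^4 * (r * (x + 1/4) / (x + 7/4))^4"
    unfolding Q_def x_def r_def pochhammer_Suc by (simp add: algebra_simps)
  also have "\<dots> = ((x+1)^2 + 1/16) * (x + 1/4)^4 * r^4"
    using x by (simp add: power_divide power_mult_distrib)
  finally have q1: "Q (Suc n) = ((x+1)^2 + 1/16) * (x + 1/4)^4 * r^4" .
  have poly: "(x^2 + 1/16) * (x + 3/4)^4 - ((x+1)^2 + 1/16) * (x + 1/4)^4 = (2 * x + 1) / 64"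
    by (simp add: field_simps) algebra
  have "real (2 * n + 1) * pochhammer (1/4::real) n ^ 4 / pochhammer (7/4) n ^ 4 = (2 * x + 1) * r^4"
    unfolding x_def r_def by (simp add: power_divide)
  also have "Q n - Q (Suc n) = ((x^2 + 1/16) * (x + 3/4)^4 - ((x+1)^2 + 1/16) * (x + 1/4)^4) * r^4"
    by (simp only: q0 q1 left_diff_distrib)
  hence "Q n - Q (Suc n) = (2 * x + 1) / 64 * r^4" by (simp only: poly)
  hence "(2 * x + 1) * r^4 = 64 * (Q n - Q (Suc n))" by simp
  finally show ?thesis .
qed

lemma Gamma_facts:
  "Gamma (9/4::real) = 5/16 * Gamma (1/4)" "Gamma (7/4::real) = 3/4 * Gamma (3/4)"
proof -
  have np: "(x::real) > 0 \<Longrightarrow> x \<notin> \<int>\<^sub>\<le>\<^sub>0" for x using nonpos_Ints_nonpos by fastforce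
  have a: "Gamma (9/4::real) = 5/4 * Gamma (5/4)" using Gamma_plus1[of "5/4::real"] np[of "5/4"] by simp
  have b: "Gamma (5/4::real) = 1/4 * Gamma (1/4)" using Gamma_plus1[of "1/4::real"] np[of "1/4"] by simp
  show "Gamma (9/4::real) = 5/16 * Gamma (1/4)" using a b by simp
  show "Gamma (7/4::real) = 3/4 * Gamma (3/4)" using Gamma_plus1[of "3/4::real"] np[of "3/4"] by simp
qed

theorem mainTheorem3:
  shows "summable (\<lambda>n. real (n + 1) * pochhammer (3/4::real) n ^ 4 / pochhammer (9/4) n ^ 4)
       \<and> (Gamma (1/4) / Gamma (3/4::real)) ^ 4
           = 80 - 2048/625 * (\<Sum>n. real (n + 1) * pochhammer (3/4::real) n ^ 4 / pochhammer (9/4) n ^ 4)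
       \<and> summable (\<lambda>n. real (2 * n + 1) * pochhammer (1/4::real) n ^ 4 / pochhammer (7/4) n ^ 4)
       \<and> (Gamma (3/4) / Gamma (1/4::real)) ^ 4
           = 1/16 - 4/81 * (\<Sum>n. real (2 * n + 1) * pochhammer (1/4::real) n ^ 4 / pochhammer (7/4) n ^ 4)"
proof -
  define Q1 where "Q1 \<equiv> \<lambda>n::nat. (real n ^ 2 + 1 * real n + 5/16) * (real n + 5/4) ^ 4 *
        (pochhammer (3/4::real) n / pochhammer (9/4) n) ^ 4"
  define Q2 where "Q2 \<equiv> \<lambda>n::nat. (real n ^ 2 + 0 * real n + 1/16) * (real n + 3/4) ^ 4 *
        (pochhammer (1/4::real) n / pochhammer (7/4) n) ^ 4"
  have l1: "Q1 \<longlonglongrightarrow> (Gamma (9/4) / Gamma (3/4)) ^ 4" unfolding Q1_def by (rule G_lim) auto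
  have l2: "Q2 \<longlonglongrightarrow> (Gamma (7/4) / Gamma (1/4)) ^ 4" unfolding Q2_def by (rule G_lim) auto
  have s1: "(\<lambda>n. real (n + 1) * pochhammer (3/4::real) n ^ 4 / pochhammer (9/4) n ^ 4)
     sums (32 * (Q1 0 - (Gamma (9/4) / Gamma (3/4)) ^ 4))"
  proof -
    have e: "real (n + 1) * pochhammer (3/4::real) n ^ 4 / pochhammer (9/4) n ^ 4 = 32 * (Q1 n - Q1 (Suc n))" for n
      unfolding Q1_def by (rule tele1)
    show ?thesis unfolding e by (intro sums_mult telescope_sums' l1)
  qed
  have s2: "(\<lambda>n. real (2 * n + 1) * pochhammer (1/4::real) n ^ 4 / pochhammer (7/4) n ^ 4)
     sums (64 * (Q2 0 - (Gamma (7/4) / Gamma (1/4)) ^ 4))"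
  proof -
    have e: "real (2 * n + 1) * pochhammer (1/4::real) n ^ 4 / pochhammer (7/4) n ^ 4 = 64 * (Q2 n - Q2 (Suc n))" for n
      unfolding Q2_def by (rule tele2)
    show ?thesis unfolding e by (intro sums_mult telescope_sums' l2)
  qed
  have q10: "Q1 0 = 5/16 * (5/4)^4" unfolding Q1_def by simp
  have q20: "Q2 0 = 1/16 * (3/4)^4" unfolding Q2_def by simp
  have p1: "(Gamma (9/4) / Gamma (3/4::real)) ^ 4 = (5/16)^4 * (Gamma (1/4) / Gamma (3/4)) ^ 4"
    unfolding Gamma_facts by (simp add: power_mult_distrib power_divide)
  have p2: "(Gamma (7/4) / Gamma (1/4::real)) ^ 4 = (3/4)^4 * (Gamma (3/4) / Gamma (1/4)) ^ 4"
    unfolding Gamma_facts by (simp add: power_mult_distrib power_divide)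
  have S1: "(\<Sum>n. real (n + 1) * pochhammer (3/4::real) n ^ 4 / pochhammer (9/4) n ^ 4)
     = 32 * (5/16 * (5/4)^4 - (5/16)^4 * (Gamma (1/4) / Gamma (3/4)) ^ 4)"
    using s1 unfolding q10 p1 by (rule sums_unique[symmetric])
  have S2: "(\<Sum>n. real (2 * n + 1) * pochhammer (1/4::real) n ^ 4 / pochhammer (7/4) n ^ 4)
     = 64 * (1/16 * (3/4)^4 - (3/4)^4 * (Gamma (3/4) / Gamma (1/4)) ^ 4)"
    using s2 unfolding q20 p2 by (rule sums_unique[symmetric])
  have A1: "(D::real) = 80 - 2048/625*(32*(5/16*(5/4)^4 - (5/16)^4*D))" for D
    by (simp add: power_divide field_simps)
  have A2: "(D::real) = 1/16 - 4/81*(64 * (1/16 * (3/4)^4 - (3/4)^4 * D))" for D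
    by (simp add: power_divide field_simps)
  show ?thesis unfolding S1 S2 using sums_summable[OF s1] sums_summable[OF s2] A1 A2 by blast
qed

end
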